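(* Let $\mathcal{X}\subset\mathbb{R}^d$ be nonempty, closed, convex and compact with diameter $D:=\max_{x,y\in\mathcal{X}}\|x-y\|$. Let $\Phi:\mathcal{X}\to\mathbb{R}$ be differentiable with $L$-Lipschitz gradient, and set $G:=\max_{x\in\mathcal{X}}\|\nabla\Phi(x)\|$, $\Phi_{\max}:=\max_{\mathcal{X}}\Phi$, $\Phi_{\min}:=\min_{\mathcal{X}}\Phi$. Let $F:\mathcal{X}\to\mathbb{R}^d$ satisfy $F(x)=-\nabla\Phi(x)+R(x)$ with $\|R(x)\|\le\varepsilon$ for all $x\in\mathcal{X}$. Run $x_{t+1}=\operatorname{Proj}_{\mathcal{X}}(x_t+\eta\nabla\Phi(x_t))$, $t=0,\dots,T-1$, from $x_0\in\mathcal{X}$ with $0<\eta\le1/L$. Define $\mathcal{G}_\eta(x_t):=\frac1\eta(x_{t+1}-x_t)$, pick $\hat t\in\arg\min_{0\le t\le T-1}\|\mathcal{G}_\eta(x_t)\|$ and set $\hat x_T:=x_{\hat t}$. Then $$\operatorname{Gap}(\hat x_T)\le (D+\eta G)\sqrt{\frac{2(\Phi_{\max}-\Phi_{\min})}{T\eta}}+D\varepsilon.$$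
   Context: For $\bar x\in\mathcal{X}$, the (Stampacchia) duality gap of the operator $F$ is $\operatorname{Gap}(\bar x):=\max_{x\in\mathcal{X}}\langle F(\bar x),\bar x-x\rangle$ with the Euclidean inner product. $\operatorname{Proj}_{\mathcal{X}}$ is Euclidean projection onto $\mathcal{X}$. *)

theory Defs
  imports "HOL-Analysis.Analysis"
begin

definition Gap :: "('a::euclidean_space \<Rightarrow> 'a) \<Rightarrow> 'a set \<Rightarrow> 'a \<Rightarrow> real" where
  "Gap F X xbar = (SUP x\<in>X. inner (F xbar) (xbar - x))"

abbreviation Proj :: "'a::euclidean_space set \<Rightarrow> 'a \<Rightarrow> 'a" where
  "Proj X y \<equiv> closest_point X y"

end

theory Submission
  imports Defs
begin

lemma ascent:
  fixes X :: "'a::euclidean_space set" and Phi :: "'a \<Rightarrow> real" and g :: "'a \<Rightarrow> 'a"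
  assumes cX: "convex X" and a: "a \<in> X" and b: "b \<in> X"
    and Phi_grad: "\<And>y. y \<in> X \<Longrightarrow> (Phi has_derivative (\<lambda>h. inner (g y) h)) (at y within X)"
    and grad_Lip: "\<And>y z. y \<in> X \<Longrightarrow> z \<in> X \<Longrightarrow> norm (g y - g z) \<le> L * norm (y - z)"
  shows "Phi a + inner (g a) (b - a) - L / 2 * (norm (b - a))\<^sup>2 \<le> Phi b"
proof -
  define h where "h = b - a"
  define \<gamma> where "\<gamma> = (\<lambda>s::real. a + s *\<^sub>R h)"
  define \<psi> where "\<psi> = (\<lambda>s. Phi (\<gamma> s) - s * inner (g a) h + L * s\<^sup>2 * (norm h)\<^sup>2 / 2)"
  have gin: "\<gamma> s \<in> X" if "s \<in> {0..1}" for s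
  proof -
    have "\<gamma> s = (1 - s) *\<^sub>R a + s *\<^sub>R b" unfolding \<gamma>_def h_def by (simp add: algebra_simps)
    then show ?thesis using that cX a b by (simp add: convex_alt)
  qed
  have dg: "(\<gamma> has_derivative (\<lambda>t. t *\<^sub>R h)) (at s within {0..1})" for s
    unfolding \<gamma>_def by (auto intro!: derivative_eq_intros)
  have dP: "((Phi \<circ> \<gamma>) has_derivative (\<lambda>t. inner (g (\<gamma> s)) (t *\<^sub>R h))) (at s within {0..1})"
    if "s \<in> {0..1}" for s
  proof -
    have "(Phi has_derivative (\<lambda>h. inner (g (\<gamma> s)) h)) (at (\<gamma> s) within \<gamma> ` {0..1})"
      by (rule has_derivative_subset[OF Phi_grad[OF gin[OF that]]]) (use gin in auto)
    from diff_chain_within[OF dg this] show ?thesis by (simp add: o_def)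
  qed
  have dpsi: "(\<psi> has_derivative (\<lambda>t. t * (inner (g (\<gamma> s)) h - inner (g a) h + L * s * (norm h)\<^sup>2))) (at s within {0..1})"
    if "s \<in> {0..1}" for s
  proof -
    have "((\<lambda>s. Phi (\<gamma> s)) has_derivative (\<lambda>t. inner (g (\<gamma> s)) (t *\<^sub>R h))) (at s within {0..1})"
      using dP[OF that] by (simp add: o_def)
    then have "(\<psi> has_derivative (\<lambda>t. inner (g (\<gamma> s)) (t *\<^sub>R h) - t * inner (g a) h + L * (2 * s * t) * (norm h)\<^sup>2 / 2)) (at s within {0..1})"
      unfolding \<psi>_def by (auto intro!: derivative_eq_intros)
    then show ?thesis by (simp add: algebra_simps)
  qed
  have cont: "continuous_on {0..1} \<psi>"
    using dpsi by (rule has_derivative_continuous_on)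
  have nonneg: "0 \<le> inner (g (\<gamma> s)) h - inner (g a) h + L * s * (norm h)\<^sup>2" if "s \<in> {0..1}" for s
  proof -
    have "norm (g (\<gamma> s) - g a) \<le> L * norm (\<gamma> s - a)" using grad_Lip gin[OF that] a by blast
    also have "norm (\<gamma> s - a) = s * norm h" using that by (simp add: \<gamma>_def)
    finally have 1: "norm (g (\<gamma> s) - g a) \<le> L * (s * norm h)" .
    have "- inner (g (\<gamma> s) - g a) h \<le> norm (g (\<gamma> s) - g a) * norm h"
      using Cauchy_Schwarz_ineq2[of "g (\<gamma> s) - g a" h] by linarith
    also have "\<dots> \<le> L * (s * norm h) * norm h" using 1 by (simp add: mult_right_mono)
    finally show ?thesis by (simp add: inner_diff_left power2_eq_square algebra_simps)
  qed
  have "\<psi> 0 \<le> \<psi> 1"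
  proof (rule DERIV_nonneg_imp_increasing_open[OF _ _ cont])
    fix s :: real assume s: "0 < s" "s < 1"
    have "(\<psi> has_derivative (\<lambda>t. t * (inner (g (\<gamma> s)) h - inner (g a) h + L * s * (norm h)\<^sup>2))) (at s)"
      using dpsi[of s] s by (simp add: at_within_Icc_at)
    then have "(\<psi> has_derivative (\<lambda>t. (inner (g (\<gamma> s)) h - inner (g a) h + L * s * (norm h)\<^sup>2) * t)) (at s)"
      by (simp add: mult.commute)
    then show "\<exists>y. DERIV \<psi> s :> y \<and> 0 \<le> y"
      using nonneg[of s] s unfolding has_field_derivative_def by (intro exI[of _ "inner (g (\<gamma> s)) h - inner (g a) h + L * s * (norm h)\<^sup>2"]) auto
  qed simp
  then show ?thesis by (simp add: \<psi>_def \<gamma>_def h_def)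
qed
theorem theorem6p7:
  fixes X :: "'a::euclidean_space set"
    and Phi :: "'a \<Rightarrow> real" and gradPhi :: "'a \<Rightarrow> 'a"
    and F R :: "'a \<Rightarrow> 'a"
    and L eta eps :: real and T :: nat and x :: "nat \<Rightarrow> 'a" and that :: nat
  assumes X_ne: "X \<noteq> {}" and X_closed: "closed X" and X_convex: "convex X"
      and X_compact: "compact X"
    and Phi_grad: "\<And>y. y \<in> X \<Longrightarrow> (Phi has_derivative (\<lambda>h. inner (gradPhi y) h)) (at y within X)"
    and grad_Lip: "\<And>y z. y \<in> X \<Longrightarrow> z \<in> X \<Longrightarrow> norm (gradPhi y - gradPhi z) \<le> L * norm (y - z)"
    and F_def: "\<And>y. y \<in> X \<Longrightarrow> F y = - gradPhi y + R y"
    and R_bound: "\<And>y. y \<in> X \<Longrightarrow> norm (R y) \<le> eps"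
    and T_pos: "T > 0"
    and x0: "x 0 \<in> X"
    and iter: "\<And>t. t < T \<Longrightarrow> x (Suc t) = Proj X (x t + eta *\<^sub>R gradPhi (x t))"
    and eta_pos: "0 < eta" and eta_le: "eta \<le> 1 / L"
    and that_lt: "that < T"
    and that_min: "\<And>t. t < T \<Longrightarrow>
        norm ((1 / eta) *\<^sub>R (x (Suc that) - x that)) \<le> norm ((1 / eta) *\<^sub>R (x (Suc t) - x t))"
  shows "Gap F X (x that)
    \<le> (diameter X + eta * (SUP y\<in>X. norm (gradPhi y)))
        * sqrt (2 * ((SUP y\<in>X. Phi y) - (INF y\<in>X. Phi y)) / (real T * eta))
      + diameter X * eps"
proof -
  have L_pos: "L > 0"
  proof (rule ccontr)
    assume "\<not> L > 0" then have "1 / L \<le> 0" by simp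
    with eta_pos eta_le show False by linarith
  qed
  have etaL: "eta * L \<le> 1" using eta_le eta_pos L_pos by (simp add: field_simps)
  have xin: "t \<le> T \<Longrightarrow> x t \<in> X" for t
  proof (induction t)
    case 0 then show ?case using x0 by simp
  next
    case (Suc t) then show ?case using iter[of t] closest_point_in_set[OF X_closed X_ne] by simp
  qed
  define d where "d = (\<lambda>t. x (Suc t) - x t)"
  have proj: "inner (x t + eta *\<^sub>R gradPhi (x t) - x (Suc t)) (z - x (Suc t)) \<le> 0"
    if "t < T" "z \<in> X" for t z
    using closest_point_dot[OF X_convex X_closed that(2), of "x t + eta *\<^sub>R gradPhi (x t)"] iter[OF that(1)]
    by simp
  have step: "(norm (d t))\<^sup>2 \<le> 2 * eta * (Phi (x (Suc t)) - Phi (x t))" if "t < T" for t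
  proof -
    have a: "x t \<in> X" and b: "x (Suc t) \<in> X" using xin that by auto
    have "inner (x t + eta *\<^sub>R gradPhi (x t) - x (Suc t)) (x t - x (Suc t)) \<le> 0"
      using proj[OF that a] .
    then have p: "(norm (d t))\<^sup>2 \<le> eta * inner (gradPhi (x t)) (d t)"
      unfolding d_def by (simp add: inner_diff_left inner_diff_right inner_add_left power2_norm_eq_inner inner_commute algebra_simps)
    have asc: "Phi (x t) + inner (gradPhi (x t)) (d t) - L / 2 * (norm (d t))\<^sup>2 \<le> Phi (x (Suc t))"
      using ascent[OF X_convex a b Phi_grad grad_Lip] unfolding d_def by blast
    have "eta * L * (norm (d t))\<^sup>2 \<le> (norm (d t))\<^sup>2" using etaL mult_right_mono[OF etaL, of "(norm (d t))\<^sup>2"] by simp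
    moreover have "2 * eta * (inner (gradPhi (x t)) (d t) - L / 2 * (norm (d t))\<^sup>2) \<le> 2 * eta * (Phi (x (Suc t)) - Phi (x t))"
      using asc eta_pos by (intro mult_left_mono) auto
    moreover have "2 * eta * (inner (gradPhi (x t)) (d t) - L / 2 * (norm (d t))\<^sup>2) = 2 * (eta * inner (gradPhi (x t)) (d t)) - eta * L * (norm (d t))\<^sup>2"
      by (simp add: algebra_simps)
    ultimately show ?thesis using p by linarith
  qed
  have bX: "bounded X" using X_compact compact_imp_bounded by blast
  have Dbound: "norm (y - z) \<le> diameter X" if "y \<in> X" "z \<in> X" for y z
    using diameter_bounded_bound[OF bX that] by (simp add: dist_norm)
  have contPhi: "continuous_on X Phi"
    by (rule has_derivative_continuous_on[of X Phi "\<lambda>y h. inner (gradPhi y) h"]) (rule Phi_grad)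
  have cPX: "compact (Phi ` X)" using compact_continuous_image[OF contPhi X_compact] .
  then have bdA: "bdd_above (Phi ` X)" and bdB: "bdd_below (Phi ` X)"
    using compact_imp_bounded[OF cPX] bounded_imp_bdd_above bounded_imp_bdd_below by auto
  have bdG: "bdd_above ((\<lambda>y. norm (gradPhi y)) ` X)"
  proof (rule bdd_aboveI2)
    fix y assume "y \<in> X"
    have "norm (gradPhi y) \<le> norm (gradPhi (x 0)) + norm (gradPhi y - gradPhi (x 0))"
      by (metis add.commute diff_add_cancel norm_triangle_ineq)
    also have "\<dots> \<le> norm (gradPhi (x 0)) + L * diameter X"
      using grad_Lip[OF \<open>y \<in> X\<close> x0] Dbound[OF \<open>y \<in> X\<close> x0] L_pos
      by (smt (verit) mult_left_mono)
    finally show "norm (gradPhi y) \<le> norm (gradPhi (x 0)) + L * diameter X" .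
  qed
  define Delta where "Delta = (SUP y\<in>X. Phi y) - (INF y\<in>X. Phi y)"
  define Gm where "Gm = (SUP y\<in>X. norm (gradPhi y))"
  define D where "D = diameter X"
  have "(\<Sum>t<T. (norm (d t))\<^sup>2) \<le> (\<Sum>t<T. 2 * eta * (Phi (x (Suc t)) - Phi (x t)))"
    using step by (intro sum_mono) auto
  also have "\<dots> = 2 * eta * (Phi (x T) - Phi (x 0))"
    using sum_lessThan_telescope[of "\<lambda>t. Phi (x t)" T] by (simp add: sum_distrib_left[symmetric])
  also have "\<dots> \<le> 2 * eta * Delta"
  proof -
    have "Phi (x T) \<le> (SUP y\<in>X. Phi y)" using xin[of T] bdA by (intro cSUP_upper) auto
    moreover have "(INF y\<in>X. Phi y) \<le> Phi (x 0)" using x0 bdB by (intro cINF_lower) auto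
    ultimately show ?thesis using eta_pos unfolding Delta_def by simp
  qed
  finally have sumb: "(\<Sum>t<T. (norm (d t))\<^sup>2) \<le> 2 * eta * Delta" .
  have dmin: "norm (d that) \<le> norm (d t)" if "t < T" for t
    using that_min[OF that] eta_pos unfolding d_def by (simp add: divide_le_cancel)
  have "real T * (norm (d that))\<^sup>2 = (\<Sum>t<T. (norm (d that))\<^sup>2)" by simp
  also have "\<dots> \<le> (\<Sum>t<T. (norm (d t))\<^sup>2)"
    using dmin by (intro sum_mono power_mono) auto
  finally have Tb: "real T * (norm (d that))\<^sup>2 \<le> 2 * eta * Delta" using sumb by linarith
  define Gn where "Gn = norm (d that) / eta"
  have Gn_nn: "0 \<le> Gn" unfolding Gn_def using eta_pos by simp
  have Gn_le: "Gn \<le> sqrt (2 * Delta / (real T * eta))"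
  proof (rule real_le_rsqrt)
    have "Gn\<^sup>2 = (norm (d that))\<^sup>2 / eta\<^sup>2" unfolding Gn_def by (simp add: power_divide)
    also have "\<dots> \<le> (2 * eta * Delta / real T) / eta\<^sup>2"
      using Tb T_pos eta_pos by (intro divide_right_mono) (simp_all add: field_simps)
    also have "\<dots> = 2 * Delta / (real T * eta)" using eta_pos by (simp add: field_simps power2_eq_square)
    finally show "Gn\<^sup>2 \<le> 2 * Delta / (real T * eta)" .
  qed
  have xh: "x that \<in> X" and xp: "x (Suc that) \<in> X" using xin that_lt by auto
  have Gm_ge: "norm (gradPhi (x that)) \<le> Gm" unfolding Gm_def using bdG xh by (intro cSUP_upper) auto
  have eps_nn: "0 \<le> eps" using R_bound[OF xh] norm_ge_zero[of "R (x that)"] by linarith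
  have D_nn: "0 \<le> D" using Dbound[OF xh xh] unfolding D_def by simp
  have bound: "inner (F (x that)) (x that - z) \<le> (D + eta * Gm) * Gn + D * eps" if z: "z \<in> X" for z
  proof -
    let ?g = "gradPhi (x that)" and ?xp = "x (Suc that)" and ?xh = "x that"
    have e1: "inner (F ?xh) (?xh - z) = inner ?g (z - ?xp) + inner ?g (?xp - ?xh) + inner (R ?xh) (?xh - z)"
      using F_def[OF xh] by (simp add: inner_diff_left inner_diff_right inner_add_left inner_minus_left)
    have r: "inner (R ?xh) (?xh - z) \<le> D * eps"
    proof -
      have "inner (R ?xh) (?xh - z) \<le> norm (R ?xh) * norm (?xh - z)" by (rule norm_cauchy_schwarz)
      also have "\<dots> \<le> eps * D" using R_bound[OF xh] Dbound[OF xh z] eps_nn unfolding D_def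
        by (intro mult_mono) auto
      finally show ?thesis by (simp add: mult.commute)
    qed
    have g2: "inner ?g (?xp - ?xh) \<le> eta * Gm * Gn"
    proof -
      have "inner ?g (?xp - ?xh) \<le> norm ?g * norm (d that)" unfolding d_def by (rule norm_cauchy_schwarz)
      also have "\<dots> \<le> Gm * norm (d that)" using Gm_ge by (intro mult_right_mono) auto
      also have "norm (d that) = eta * Gn" unfolding Gn_def using eta_pos by simp
      finally show ?thesis by (simp add: algebra_simps)
    qed
    have g1: "inner ?g (z - ?xp) \<le> D * Gn"
    proof -
      have "inner (?xh + eta *\<^sub>R ?g - ?xp) (z - ?xp) \<le> 0" using proj[OF that_lt z] .
      then have "eta * inner ?g (z - ?xp) \<le> inner (d that) (z - ?xp)"
        unfolding d_def by (simp add: inner_diff_left inner_add_left algebra_simps)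
      also have "\<dots> \<le> norm (d that) * norm (z - ?xp)" by (rule norm_cauchy_schwarz)
      also have "\<dots> \<le> norm (d that) * D" using Dbound[OF z xp] unfolding D_def by (intro mult_left_mono) auto
      also have "\<dots> = eta * (D * Gn)" unfolding Gn_def using eta_pos by simp
      finally show ?thesis using eta_pos by simp
    qed
    show ?thesis using e1 r g1 g2 by (simp add: algebra_simps)
  qed
  have "Gap F X (x that) \<le> (D + eta * Gm) * Gn + D * eps"
    unfolding Gap_def using X_ne bound by (intro cSUP_least) auto
  also have "\<dots> \<le> (D + eta * Gm) * sqrt (2 * Delta / (real T * eta)) + D * eps"
  proof -
    have "0 \<le> D + eta * Gm" using D_nn eta_pos Gm_ge norm_ge_zero[of "gradPhi (x that)"]
      by (smt (verit) mult_nonneg_nonneg)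
    then show ?thesis using Gn_le by (simp add: mult_left_mono)
  qed
  finally show ?thesis unfolding D_def Gm_def Delta_def .
qed

end
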